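(* Let $X$ be a real normed linear space and $x\in X\setminus\{\theta\}$. Let $y_1,y_2\in X\setminus\{\theta\}$ satisfy $x\perp_B y_1$ and $x\perp_B y_2$. If $x$ is $\varepsilon$-smooth, where $0\le\varepsilon<\frac{2\|y_1+y_2\|}{\|y_1\|+\|y_2\|}\le2$, then there exists $\varepsilon_1\in[0,1)$ such that $x\perp_B^{\varepsilon_1}(y_1+y_2)$.
   Context: $x\perp_B y$ (Birkhoff–James orthogonality) means $\|x+\lambda y\|\ge\|x\|$ for all $\lambda\in\mathbb{R}$. For $\delta\in[0,1)$, $x\perp_B^\delta y$ means $\|x+\lambda y\|^2\ge\|x\|^2-2\delta\|x\|\|\lambda y\|$ for all $\lambda\in\mathbb{R}$. For $x\neq\theta$, $J(x)=\{f\in S_{X^*}:f(x)=\|x\|\}$, and $x$ is $\varepsilon$-smooth if $\sup_{f,g\in J(x)}\|f-g\|\le\varepsilon$. *)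

theory Defs
  imports "HOL-Analysis.Analysis"
begin

definition bj_orth :: "'a::real_normed_vector \<Rightarrow> 'a \<Rightarrow> bool" where
  "bj_orth x y \<longleftrightarrow> (\<forall>t::real. norm (x + t *\<^sub>R y) \<ge> norm x)"

definition bj_orth_approx :: "real \<Rightarrow> 'a::real_normed_vector \<Rightarrow> 'a \<Rightarrow> bool" where
  "bj_orth_approx \<delta> x y \<longleftrightarrow>
     (\<forall>t::real. (norm (x + t *\<^sub>R y))\<^sup>2 \<ge> (norm x)\<^sup>2 - 2 * \<delta> * norm x * norm (t *\<^sub>R y))"

definition supp_funct :: "'a::real_normed_vector \<Rightarrow> ('a \<Rightarrow>\<^sub>L real) set" where
  "supp_funct x = {f. norm f = 1 \<and> blinfun_apply f x = norm x}"

definition eps_smooth :: "real \<Rightarrow> 'a::real_normed_vector \<Rightarrow> bool" where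
  "eps_smooth \<epsilon> x \<longleftrightarrow> x \<noteq> 0 \<and> (\<forall>f\<in>supp_funct x. \<forall>g\<in>supp_funct x. norm (f - g) \<le> \<epsilon>)"

end

theory Submission imports Defs begin

definition lin_graph :: "('a::real_normed_vector \<times> real) set \<Rightarrow> bool" where
"lin_graph G \<longleftrightarrow> (0,0) \<in> G
  \<and> (\<forall>v a w b c d. (v,a)\<in>G \<longrightarrow> (w,b)\<in>G \<longrightarrow> (c *\<^sub>R v + d *\<^sub>R w, c*a + d*b) \<in> G)
  \<and> (\<forall>v a b. (v,a)\<in>G \<longrightarrow> (v,b)\<in>G \<longrightarrow> a = b)
  \<and> (\<forall>v a. (v,a)\<in>G \<longrightarrow> a \<le> norm v)"

lemma graph_extend:
  fixes G :: "('a::real_normed_vector \<times> real) set"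
  assumes lg: "lin_graph G" and nw: "\<forall>a. (w,a) \<notin> G"
  shows "\<exists>G'. lin_graph G' \<and> G \<subseteq> G' \<and> G' \<noteq> G"
proof -
  have z: "(0,0) \<in> G"
   and cl: "\<And>v a u b c d. (v,a)\<in>G \<Longrightarrow> (u,b)\<in>G \<Longrightarrow> (c *\<^sub>R v + d *\<^sub>R u, c*a + d*b) \<in> G"
   and fn: "\<And>v a b. (v,a)\<in>G \<Longrightarrow> (v,b)\<in>G \<Longrightarrow> a = b"
   and dm: "\<And>v a. (v,a)\<in>G \<Longrightarrow> a \<le> norm v"
    using lg unfolding lin_graph_def by blast+
  have sc: "(r *\<^sub>R v, r * a) \<in> G" if "(v,a) \<in> G" for r v a
    using cl[OF that z, of r 0] by simp
  have key: "a - norm (u - w) \<le> norm (v + w) - b" if "(u,a)\<in>G" "(v,b)\<in>G" for u a v b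
  proof -
    have "(u + v, a + b) \<in> G" using cl[OF that, of 1 1] by simp
    then have "a + b \<le> norm (u + v)" by (rule dm)
    also have "norm (u + v) = norm ((u - w) + (v + w))" by (simp add: algebra_simps)
    also have "\<dots> \<le> norm (u - w) + norm (v + w)" by (rule norm_triangle_ineq)
    finally show ?thesis by simp
  qed
  define S where "S = {a - norm (u - w) | u a. (u,a)\<in>G}"
  define c where "c = Sup S"
  have Sne: "S \<noteq> {}" using z unfolding S_def by blast
  have Sbd: "bdd_above S" unfolding S_def bdd_above_def
    using key[OF _ z] by (intro exI[of _ "norm w"]) auto
  have c1: "a - norm (u - w) \<le> c" if "(u,a)\<in>G" for u a
    unfolding c_def using that Sbd by (intro cSup_upper) (auto simp: S_def)
  have c2: "c \<le> norm (v + w) - b" if "(v,b)\<in>G" for v b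
    unfolding c_def using Sne key[OF _ that] by (intro cSup_least) (auto simp: S_def)
  define G' where "G' = {(u + t *\<^sub>R w, a + t*c) | u a t. (u,a)\<in>G}"
  have "lin_graph G'"
    unfolding lin_graph_def
  proof (intro conjI allI impI)
    show "(0,0) \<in> G'" unfolding G'_def using z by force
  next
    fix v a v' a' r s assume "(v,a)\<in>G'" "(v',a')\<in>G'"
    then obtain u b t u' b' t' where h: "(u,b)\<in>G" "v = u + t *\<^sub>R w" "a = b + t*c"
       "(u',b')\<in>G" "v' = u' + t' *\<^sub>R w" "a' = b' + t'*c"
      unfolding G'_def by blast
    have "(r *\<^sub>R u + s *\<^sub>R u', r*b + s*b') \<in> G" using cl h by blast
    moreover have "r *\<^sub>R v + s *\<^sub>R v' = (r *\<^sub>R u + s *\<^sub>R u') + (r*t + s*t') *\<^sub>R w"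
      using h by (simp add: algebra_simps)
    moreover have "r*a + s*a' = (r*b + s*b') + (r*t + s*t')*c"
      using h by (simp add: algebra_simps)
    ultimately show "(r *\<^sub>R v + s *\<^sub>R v', r*a + s*a') \<in> G'" unfolding G'_def by blast
  next
    fix v a a' assume "(v,a)\<in>G'" "(v,a')\<in>G'"
    then obtain u b t u' b' t' where h: "(u,b)\<in>G" "v = u + t *\<^sub>R w" "a = b + t*c"
       "(u',b')\<in>G" "v = u' + t' *\<^sub>R w" "a' = b' + t'*c"
      unfolding G'_def by blast
    have tt: "t = t'"
    proof (rule ccontr)
      assume ne: "t \<noteq> t'"
      have "(inverse (t - t') *\<^sub>R u' + (- inverse (t - t')) *\<^sub>R u,
             inverse (t - t') * b' + (- inverse (t - t')) * b) \<in> G"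
        using cl h by blast
      moreover have "inverse (t - t') *\<^sub>R u' + (- inverse (t - t')) *\<^sub>R u = w"
      proof -
        have "u' - u = (t - t') *\<^sub>R w" using h by (simp add: algebra_simps)
        then have "inverse (t - t') *\<^sub>R (u' - u) = w" using ne by simp
        then show ?thesis by (simp add: algebra_simps)
      qed
      ultimately show False using nw by auto
    qed
    then have "u = u'" using h by simp
    then have "b = b'" using fn h by blast
    then show "a = a'" using h tt by simp
  next
    fix v a assume "(v,a)\<in>G'"
    then obtain u b t where h: "(u,b)\<in>G" "v = u + t *\<^sub>R w" "a = b + t*c"
      unfolding G'_def by blast
    show "a \<le> norm v"
    proof (cases "t > 0")
      case True
      have "(inverse t *\<^sub>R u, inverse t * b) \<in> G" using sc h by blast
      from c2[OF this] have "inverse t * b + c \<le> norm (inverse t *\<^sub>R u + w)" by simp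
      then have "t * (inverse t * b + c) \<le> t * norm (inverse t *\<^sub>R u + w)"
        using True by (simp add: mult_left_mono)
      also have "t * norm (inverse t *\<^sub>R u + w) = norm (t *\<^sub>R (inverse t *\<^sub>R u + w))"
        using True by simp
      also have "t *\<^sub>R (inverse t *\<^sub>R u + w) = u + t *\<^sub>R w"
        using True by (simp add: algebra_simps)
      finally show ?thesis using h True by (simp add: algebra_simps)
    next
      case False
      show ?thesis
      proof (cases "t = 0")
        case True then show ?thesis using h dm by simp
      next
        case f2: False
        define s where "s = - t"
        have sp: "s > 0" using False f2 s_def by simp
        have "(inverse s *\<^sub>R u, inverse s * b) \<in> G" using sc h by blast
        from c1[OF this] have "inverse s * b - c \<le> norm (inverse s *\<^sub>R u - w)" by simp
        then have "s * (inverse s * b - c) \<le> s * norm (inverse s *\<^sub>R u - w)"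
          using sp by (simp add: mult_left_mono)
        also have "s * norm (inverse s *\<^sub>R u - w) = norm (s *\<^sub>R (inverse s *\<^sub>R u - w))"
          using sp by simp
        also have "s *\<^sub>R (inverse s *\<^sub>R u - w) = u + t *\<^sub>R w"
          using sp by (simp add: algebra_simps s_def)
        finally show ?thesis using h sp by (simp add: algebra_simps s_def)
      qed
    qed
  qed
  moreover have "G \<subseteq> G'"
  proof
    fix p assume "p \<in> G"
    then show "p \<in> G'" unfolding G'_def by (cases p) force
  qed
  moreover have "(w, c) \<in> G'" unfolding G'_def using z by force
  ultimately show ?thesis using nw by blast
qed


lemma graph_hb:
  fixes G0 :: "('a::real_normed_vector \<times> real) set"
  assumes lg0: "lin_graph G0"
  shows "\<exists>g::'a \<Rightarrow>\<^sub>L real. norm g \<le> 1 \<and> (\<forall>(v,a)\<in>G0. blinfun_apply g v = a)"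
proof -
  define A where "A = {G. lin_graph G \<and> G0 \<subseteq> G}"
  have "\<forall>C\<in>chains A. \<exists>U\<in>A. \<forall>X\<in>C. X \<subseteq> U"
  proof
    fix C assume C: "C \<in> chains A"
    show "\<exists>U\<in>A. \<forall>X\<in>C. X \<subseteq> U"
    proof (cases "C = {}")
      case True then show ?thesis using lg0 by (auto simp: A_def)
    next
      case False
      have sub: "C \<subseteq> A" and ch: "\<And>X Y. X \<in> C \<Longrightarrow> Y \<in> C \<Longrightarrow> X \<subseteq> Y \<or> Y \<subseteq> X"
        using C unfolding chains_def chain_subset_def by blast+
      have lgs: "\<And>X. X \<in> C \<Longrightarrow> lin_graph X" "\<And>X. X \<in> C \<Longrightarrow> G0 \<subseteq> X" using sub A_def by auto
      have "lin_graph (\<Union>C)"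
        unfolding lin_graph_def
      proof (intro conjI allI impI)
        show "(0,0) \<in> \<Union>C" using False lgs unfolding lin_graph_def by blast
      next
        fix v a w b c d assume "(v,a) \<in> \<Union>C" "(w,b) \<in> \<Union>C"
        then obtain X Y where XY: "X \<in> C" "Y \<in> C" "(v,a)\<in>X" "(w,b)\<in>Y" by blast
        show "(c *\<^sub>R v + d *\<^sub>R w, c*a + d*b) \<in> \<Union>C"
        proof (cases "X \<subseteq> Y")
          case True then show ?thesis using XY lgs(1)[OF XY(2)] unfolding lin_graph_def by blast
        next
          case False then have "Y \<subseteq> X" using ch XY by blast
          then show ?thesis using XY lgs(1)[OF XY(1)] unfolding lin_graph_def by blast
        qed
      next
        fix v a b assume "(v,a) \<in> \<Union>C" "(v,b) \<in> \<Union>C"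
        then obtain X Y where XY: "X \<in> C" "Y \<in> C" "(v,a)\<in>X" "(v,b)\<in>Y" by blast
        show "a = b"
        proof (cases "X \<subseteq> Y")
          case True then show ?thesis using XY lgs(1)[OF XY(2)] unfolding lin_graph_def by blast
        next
          case False then have "Y \<subseteq> X" using ch XY by blast
          then show ?thesis using XY lgs(1)[OF XY(1)] unfolding lin_graph_def by blast
        qed
      next
        fix v a assume "(v,a) \<in> \<Union>C"
        then show "a \<le> norm v" using lgs unfolding lin_graph_def by blast
      qed
      moreover have "G0 \<subseteq> \<Union>C" using False lgs by blast
      ultimately show ?thesis unfolding A_def by blast
    qed
  qed
  from Zorn_Lemma2[OF this] obtain M where M: "M \<in> A" "\<And>X. X \<in> A \<Longrightarrow> M \<subseteq> X \<Longrightarrow> X = M"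
    by blast
  have lgM: "lin_graph M" and G0M: "G0 \<subseteq> M" using M(1) A_def by auto
  have tot: "\<exists>a. (w,a) \<in> M" for w
  proof (rule ccontr)
    assume "\<nexists>a. (w, a) \<in> M"
    then obtain G' where "lin_graph G'" "M \<subseteq> G'" "G' \<noteq> M" using graph_extend[OF lgM] by blast
    moreover then have "G' \<in> A" using G0M A_def by auto
    ultimately show False using M(2) by blast
  qed
  have z: "(0,0) \<in> M"
   and cl: "\<And>v a u b c d. (v,a)\<in>M \<Longrightarrow> (u,b)\<in>M \<Longrightarrow> (c *\<^sub>R v + d *\<^sub>R u, c*a + d*b) \<in> M"
   and fn: "\<And>v a b. (v,a)\<in>M \<Longrightarrow> (v,b)\<in>M \<Longrightarrow> a = b"
   and dm: "\<And>v a. (v,a)\<in>M \<Longrightarrow> a \<le> norm v"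
    using lgM unfolding lin_graph_def by blast+
  define g where "g v = (THE a. (v,a) \<in> M)" for v
  have gin: "(v, g v) \<in> M" for v
    unfolding g_def using tot[of v] fn by (metis theI)
  have geq: "(v,a) \<in> M \<Longrightarrow> g v = a" for v a using gin fn by blast
  have glin: "g (c *\<^sub>R v + d *\<^sub>R u) = c * g v + d * g u" for c d v u
    using cl[OF gin gin] geq by blast
  have gadd: "g (v + u) = g v + g u" for v u using glin[of 1 v 1 u] by simp
  have gsc: "g (r *\<^sub>R v) = r *\<^sub>R g v" for r v using glin[of r v 0 0] gin[of 0] geq[OF z] by simp
  have gb: "norm (g v) \<le> norm v * 1" for v
  proof -
    have "g v \<le> norm v" using dm gin by blast
    moreover have "g (-v) \<le> norm (-v)" using dm gin by blast
    moreover have "g (-v) = - g v" using gsc[of "-1" v] by simp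
    ultimately show ?thesis by simp
  qed
  have bl: "bounded_linear g" by (rule bounded_linear_intro[OF gadd gsc gb])
  define gg where "gg = Blinfun g"
  have app: "blinfun_apply gg = g" unfolding gg_def using bl by (rule bounded_linear_Blinfun_apply)
  have "norm gg \<le> 1" by (rule norm_blinfun_bound) (use gb app in auto)
  moreover have "\<forall>(v,a)\<in>G0. blinfun_apply gg v = a" using G0M geq app by auto
  ultimately show ?thesis by blast
qed


lemma james:
  fixes x y :: "'a::real_normed_vector"
  assumes x0: "x \<noteq> 0" and o: "bj_orth x y"
  shows "\<exists>f\<in>supp_funct x. blinfun_apply f y = 0"
proof -
  have ort: "norm x \<le> norm (x + t *\<^sub>R y)" for t using o unfolding bj_orth_def by blast
  define G0 where "G0 = {(a *\<^sub>R x + b *\<^sub>R y, a * norm x) | a b. True}"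
  have "lin_graph G0"
    unfolding lin_graph_def
  proof (intro conjI allI impI)
    show "(0,0) \<in> G0" unfolding G0_def by (auto intro!: exI[of _ 0])
  next
    fix v a w b c d assume "(v,a) \<in> G0" "(w,b) \<in> G0"
    then obtain a1 b1 a2 b2 where h: "v = a1 *\<^sub>R x + b1 *\<^sub>R y" "a = a1 * norm x"
      "w = a2 *\<^sub>R x + b2 *\<^sub>R y" "b = a2 * norm x" unfolding G0_def by blast
    have "c *\<^sub>R v + d *\<^sub>R w = (c*a1 + d*a2) *\<^sub>R x + (c*b1 + d*b2) *\<^sub>R y"
      using h by (simp add: algebra_simps)
    moreover have "c*a + d*b = (c*a1 + d*a2) * norm x" using h by (simp add: algebra_simps)
    ultimately show "(c *\<^sub>R v + d *\<^sub>R w, c*a + d*b) \<in> G0" unfolding G0_def by blast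
  next
    fix v a b assume "(v,a) \<in> G0" "(v,b) \<in> G0"
    then obtain a1 b1 a2 b2 where h: "v = a1 *\<^sub>R x + b1 *\<^sub>R y" "a = a1 * norm x"
      "v = a2 *\<^sub>R x + b2 *\<^sub>R y" "b = a2 * norm x" unfolding G0_def by blast
    have "a1 = a2"
    proof (rule ccontr)
      assume ne: "a1 \<noteq> a2"
      have "(a1 - a2) *\<^sub>R x = (b2 - b1) *\<^sub>R y" using h by (simp add: algebra_simps)
      then have "x = ((b2 - b1) / (a1 - a2)) *\<^sub>R y" using ne
        by (metis (no_types, lifting) divide_inverse_commute eq_vector_fraction_iff right_minus_eq)
      then have "x + (- ((b2 - b1) / (a1 - a2))) *\<^sub>R y = 0" by simp
      then have "norm x \<le> 0" using ort[of "- ((b2 - b1) / (a1 - a2))"] by (metis norm_zero)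
      with x0 show False by simp
    qed
    then show "a = b" using h by simp
  next
    fix v a assume "(v,a) \<in> G0"
    then obtain a1 b1 where h: "v = a1 *\<^sub>R x + b1 *\<^sub>R y" "a = a1 * norm x" unfolding G0_def by blast
    show "a \<le> norm v"
    proof (cases "a1 = 0")
      case True then show ?thesis using h by simp
    next
      case False
      have "v = a1 *\<^sub>R (x + (b1 / a1) *\<^sub>R y)" using h False by (simp add: algebra_simps)
      then have "norm v = \<bar>a1\<bar> * norm (x + (b1 / a1) *\<^sub>R y)" by simp
      moreover have "\<bar>a1\<bar> * norm x \<le> \<bar>a1\<bar> * norm (x + (b1 / a1) *\<^sub>R y)"
        using ort by (simp add: mult_left_mono)
      moreover have "a \<le> \<bar>a1\<bar> * norm x" using h by (simp add: mult_right_mono)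
      ultimately show ?thesis by linarith
    qed
  qed
  from graph_hb[OF this] obtain g :: "'a \<Rightarrow>\<^sub>L real" where g: "norm g \<le> 1"
     "\<forall>(v,a)\<in>G0. blinfun_apply g v = a" by blast
  have "(1 *\<^sub>R x + 0 *\<^sub>R y, 1 * norm x) \<in> G0" unfolding G0_def by blast
  then have gx: "blinfun_apply g x = norm x" using g by auto
  have "(0 *\<^sub>R x + 1 *\<^sub>R y, 0 * norm x) \<in> G0" unfolding G0_def by blast
  then have gy: "blinfun_apply g y = 0" using g by auto
  have "norm x \<le> norm g * norm x" using norm_blinfun[of g x] gx by simp
  then have "1 \<le> norm g" using x0 by simp
  then have "norm g = 1" using g by simp
  then show ?thesis using gx gy unfolding supp_funct_def by blast
qed


lemma approx_from_funct:
  fixes x z :: "'a::real_normed_vector" and f :: "'a \<Rightarrow>\<^sub>L real"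
  assumes f: "f \<in> supp_funct x" and z0: "z \<noteq> 0"
  shows "bj_orth_approx (\<bar>blinfun_apply f z\<bar> / norm z) x z"
  unfolding bj_orth_approx_def
proof
  fix t :: real
  let ?c = "\<bar>blinfun_apply f z\<bar> / norm z"
  have nf: "norm f = 1" and fx: "blinfun_apply f x = norm x" using f unfolding supp_funct_def by auto
  have "blinfun_apply f (x + t *\<^sub>R z) \<le> norm (x + t *\<^sub>R z)"
    using norm_blinfun[of f "x + t *\<^sub>R z"] nf by simp
  moreover have "blinfun_apply f (x + t *\<^sub>R z) = norm x + t * blinfun_apply f z"
    using fx by (simp add: blinfun.add_right blinfun.scaleR_right)
  moreover have "t * blinfun_apply f z \<ge> - (\<bar>t\<bar> * \<bar>blinfun_apply f z\<bar>)"
  proof -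
    have "\<bar>t * blinfun_apply f z\<bar> = \<bar>t\<bar> * \<bar>blinfun_apply f z\<bar>" by (rule abs_mult)
    moreover have "- \<bar>t * blinfun_apply f z\<bar> \<le> t * blinfun_apply f z" by arith
    ultimately show ?thesis by simp
  qed
  moreover have "?c * norm (t *\<^sub>R z) = \<bar>t\<bar> * \<bar>blinfun_apply f z\<bar>" using z0 by simp
  ultimately have N: "norm (x + t *\<^sub>R z) \<ge> norm x - ?c * norm (t *\<^sub>R z)" by linarith
  define s where "s = ?c * norm (t *\<^sub>R z)"
  define n where "n = norm x"
  define N where "N = norm (x + t *\<^sub>R z)"
  have s0: "s \<ge> 0" "n \<ge> 0" "N \<ge> 0" "N \<ge> n - s" using N unfolding s_def n_def N_def by auto
  have "N\<^sup>2 \<ge> n\<^sup>2 - 2 * n * s"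
  proof (cases "n - s \<ge> 0")
    case True
    then have "(n - s)\<^sup>2 \<le> N\<^sup>2" using s0 by (simp add: power_mono)
    moreover have "(n - s)\<^sup>2 = n\<^sup>2 - 2 * n * s + s\<^sup>2" by (simp add: power2_eq_square algebra_simps)
    moreover have "s\<^sup>2 \<ge> 0" by simp
    ultimately show ?thesis by linarith
  next
    case False
    then have "n * s \<ge> n * n" using s0 by (simp add: mult_left_mono)
    moreover have "N\<^sup>2 \<ge> 0" by simp
    moreover have "n\<^sup>2 = n * n" by (simp add: power2_eq_square)
    moreover have "n * n \<ge> 0" by simp
    ultimately show ?thesis by linarith
  qed
  moreover have "2 * ?c * norm x * norm (t *\<^sub>R z) = 2 * n * s" unfolding s_def n_def by (simp only: mult_ac)
  ultimately show "(norm (x + t *\<^sub>R z))\<^sup>2 \<ge> (norm x)\<^sup>2 - 2 * ?c * norm x * norm (t *\<^sub>R z)"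
    unfolding N_def n_def by linarith
qed

theorem theorem4p3:
  fixes x y1 y2 :: "'a::real_normed_vector" and \<epsilon> :: real
  assumes "x \<noteq> 0" and "y1 \<noteq> 0" and "y2 \<noteq> 0"
    and "bj_orth x y1" and "bj_orth x y2"
    and "eps_smooth \<epsilon> x"
    and "0 \<le> \<epsilon>"
    and "\<epsilon> < 2 * norm (y1 + y2) / (norm y1 + norm y2)"
    and "2 * norm (y1 + y2) / (norm y1 + norm y2) \<le> 2"
  shows "\<exists>\<epsilon>1. 0 \<le> \<epsilon>1 \<and> \<epsilon>1 < 1 \<and> bj_orth_approx \<epsilon>1 x (y1 + y2)"
proof -
  obtain f1 where f1: "f1 \<in> supp_funct x" "blinfun_apply f1 y1 = 0" using james assms(1,4) by blast
  obtain f2 where f2: "f2 \<in> supp_funct x" "blinfun_apply f2 y2 = 0" using james assms(1,5) by blast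
  have d: "norm (f1 - f2) \<le> \<epsilon>" "norm (f2 - f1) \<le> \<epsilon>" using assms(6) f1 f2 unfolding eps_smooth_def by blast+
  let ?z = "y1 + y2"
  have pos: "norm y1 + norm y2 > 0" using assms(2) by (simp add: add_pos_nonneg)
  have e2: "\<epsilon> * (norm y1 + norm y2) < 2 * norm ?z" using assms(8) pos by (simp add: pos_less_divide_eq)
  have a1: "\<bar>blinfun_apply f1 ?z\<bar> \<le> \<epsilon> * norm y2"
  proof -
    have "blinfun_apply f1 ?z = blinfun_apply (f1 - f2) y2"
      using f1 f2 by (simp add: blinfun.add_right blinfun.diff_left)
    also have "\<bar>\<dots>\<bar> \<le> norm (f1 - f2) * norm y2" using norm_blinfun by (metis real_norm_def)
    also have "\<dots> \<le> \<epsilon> * norm y2" using d by (simp add: mult_right_mono)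
    finally show ?thesis .
  qed
  have a2: "\<bar>blinfun_apply f2 ?z\<bar> \<le> \<epsilon> * norm y1"
  proof -
    have "blinfun_apply f2 ?z = blinfun_apply (f2 - f1) y1"
      using f1 f2 by (simp add: blinfun.add_right blinfun.diff_left)
    also have "\<bar>\<dots>\<bar> \<le> norm (f2 - f1) * norm y1" using norm_blinfun by (metis real_norm_def)
    also have "\<dots> \<le> \<epsilon> * norm y1" using d by (simp add: mult_right_mono)
    finally show ?thesis .
  qed
  have sum: "\<bar>blinfun_apply f1 ?z\<bar> + \<bar>blinfun_apply f2 ?z\<bar> < 2 * norm ?z"
    using a1 a2 e2 by (simp add: algebra_simps)
  then have z0: "?z \<noteq> 0" by auto
  have nz: "norm ?z > 0" using z0 by simp
  obtain f where f: "f \<in> supp_funct x" "\<bar>blinfun_apply f ?z\<bar> < norm ?z"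
  proof (cases "\<bar>blinfun_apply f1 ?z\<bar> < norm ?z")
    case True then show ?thesis using that f1 by blast
  next
    case False
    then have "\<bar>blinfun_apply f2 ?z\<bar> < norm ?z" using sum by linarith
    then show ?thesis using that f2 by blast
  qed
  show ?thesis
    apply (rule exI[of _ "\<bar>blinfun_apply f ?z\<bar> / norm ?z"])
    using approx_from_funct[OF f(1) z0] f(2) nz by simp
qed

end
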